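(* Let $y\in\mathbb{R}^N$, let $H$ be a real $N\times p$ matrix ($N\le p$) with $\operatorname{rank}(H)=N$ and largest singular value equal to $1$, let $\gamma^2>0$, $\epsilon^2>0$, $\sigma^2>0$ be given constants, and let $p_{q}$ be the Markov tree prior probability mass function on $\{0,1\}^p$ described in the context. For $q=(q_1,\dots,q_p)\in\{0,1\}^p$ set $$D(q)=\operatorname{diag}\bigl((\gamma^2)^{q_1}(\epsilon^2)^{1-q_1},\dots,(\gamma^2)^{q_p}(\epsilon^2)^{1-q_p}\bigr).$$ Consider the EM iteration on $\theta=(q,s)\in\{0,1\}^p\times\mathbb{R}^p$, $j=0,1,2,\dots$: E step: $z^{(j)}=s^{(j)}+H^T(y-Hs^{(j)})$; M step: $\theta^{(j+1)}=(q^{(j+1)},s^{(j+1)})\in\arg\max_{(q,s)}\Bigl\{-\tfrac12\,\frac{\|z^{(j)}-s\|_2^2+s^TD(q)^{-1}s}{\sigma^2}+\ln p_{q}(q)+\tfrac12\ln\bigl(\tfrac{\epsilon^2}{\gamma^2}\bigr)\sum_{i=1}^p q_i\Bigr\}$. Then the signal and binary state variable estimates $s^{(+\infty)}$ and $q^{(+\infty)}$ obtained upon convergence of this iteration (i.e., at a fixed point of the E and M steps) satisfy $$s^{(+\infty)}=\bar s(q^{(+\infty)}),\qquad\text{where }\ \bar s(q)=D(q)H^T\bigl[I_N+HD(q)H^T\bigr]^{-1}y .$$ Thus the iteration provides an estimate $q^{(+\infty)}$ of the state variables together with the solution $\bar s(q^{(+\infty)})$ of the corresponding linear system as the signal esti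mate.
   Context: Setting: measurements $y=Hs+$ noise with likelihood $\mathcal N(y\mid Hs,\sigma^2 I_N)$; signal prior $s\mid q,\sigma^2\sim\mathcal N(0,\sigma^2 D(q))$, so $q_i=1$ (resp. $0$) marks large (resp. small) coefficients. The prior $p_q$: the indices $\{1,\dots,p\}$ correspond bijectively (via a fixed map $\upsilon$) to the positions $(i_1,i_2)$ of a $\rho\times\kappa$ array of two-dimensional wavelet coefficients with $L$ decomposition levels. The approximation set is $\mathcal A=\upsilon(\{1,\dots,\rho/2^L\}\times\{1,\dots,\kappa/2^L\})$, the root set is $\mathcal T_{\mathrm{root}}=\upsilon(\{1,\dots,\rho/2^{L-1}\}\times\{1,\dots,\kappa/2^{L-1}\})\setminus\mathcal A$, and the tree set is $\mathcal T=\{1,\dots,p\}\setminus\mathcal A$. The node at $(i_1,i_2)$ is the parent $\pi(\cdot)$ of the four nodes $(2i_1-1,2i_2-1),(2i_1-1,2i_2),(2i_1,2i_2-1),(2i_1,2i_2)$. Given constants $P_{\mathrm{root}},P_{\mathrm H},P_{\mathrm L}\in(0,1)$: $\Pr\{q_i=1\}=1$ for $i\in\mathcal A$; $\Pr\{q_i=1\}=P_{\mathrm{root}}$ independently for $i\in\mathcal T_{\mathrm{root}}$; and for $i\in\mathcal T\setminus\mathcal T_{\mathrm{root}}$, $\Pr\{q_i=1\mid q_{\pi(i)}\}=P_{\mathrm H}$ if $q_{\pi(i)}=1$ and $P_{\mathrm L}$ if $q_{\pi(i)}=0$ (Markov tree). $\|\cdot\|_2$ is the Euclidean norm. *)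

theory Defs
  imports "HOL-Analysis.Analysis"
begin

text \<open>Prior variance matrix D(q) = diag((gamma2)^{q_i} (eps2)^{1-q_i}); gamma2, eps2 stand for
  the constants gamma^2, epsilon^2.\<close>
definition Dmat :: "real \<Rightarrow> real \<Rightarrow> ('p::finite \<Rightarrow> bool) \<Rightarrow> real^'p^'p" where
  "Dmat gamma2 eps2 q = (\<chi> i j. if i = j then (if q i then gamma2 else eps2) else 0)"

text \<open>Wavelet-array index sets (positions (i1,i2) in {1..rho} x {1..kappa}).\<close>
definition approx_pos :: "nat \<Rightarrow> nat \<Rightarrow> nat \<Rightarrow> (nat \<times> nat) set" where
  "approx_pos rho kappa L = {1..rho div 2^L} \<times> {1..kappa div 2^L}"

definition root_pos :: "nat \<Rightarrow> nat \<Rightarrow> nat \<Rightarrow> (nat \<times> nat) set" where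
  "root_pos rho kappa L =
     ({1..rho div 2^(L-1)} \<times> {1..kappa div 2^(L-1)}) - approx_pos rho kappa L"

text \<open>(i1,i2) is the parent of (2i1-1,2i2-1),(2i1-1,2i2),(2i1,2i2-1),(2i1,2i2).\<close>
definition parent_pos :: "nat \<times> nat \<Rightarrow> nat \<times> nat" where
  "parent_pos ab = ((fst ab + 1) div 2, (snd ab + 1) div 2)"

definition bern :: "real \<Rightarrow> bool \<Rightarrow> real" where
  "bern P b = (if b then P else 1 - P)"

definition markov_tree_prior ::
  "nat \<Rightarrow> nat \<Rightarrow> nat \<Rightarrow> ('p::finite \<Rightarrow> nat \<times> nat) \<Rightarrow> real \<Rightarrow> real \<Rightarrow> real \<Rightarrow> ('p \<Rightarrow> bool) \<Rightarrow> real" where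
  "markov_tree_prior rho kappa L ups Proot PH PL q =
     (\<Prod>i\<in>UNIV.
        if ups i \<in> approx_pos rho kappa L then (if q i then 1 else 0)
        else if ups i \<in> root_pos rho kappa L then bern Proot (q i)
        else bern (if q (inv ups (parent_pos (ups i))) then PH else PL) (q i))"

definition em_objective ::
  "real \<Rightarrow> real \<Rightarrow> real \<Rightarrow> (('p::finite \<Rightarrow> bool) \<Rightarrow> real) \<Rightarrow> real^'p \<Rightarrow> ('p \<Rightarrow> bool) \<Rightarrow> real^'p \<Rightarrow> real" where
  "em_objective gamma2 eps2 sigma2 prior z q s =
     - (1/2) * ((norm (z - s))^2 + s \<bullet> (matrix_inv (Dmat gamma2 eps2 q) *v s)) / sigma2
     + ln (prior q) + (1/2) * ln (eps2 / gamma2) * (\<Sum>i\<in>UNIV. of_bool (q i))"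

definition em_estep :: "real^'p^'n \<Rightarrow> real^'n \<Rightarrow> real^'p \<Rightarrow> real^'p" where
  "em_estep H y s = s + transpose H *v (y - H *v s)"

text \<open>Since ln p_q(q) = -infinity off the support, the maximization ranges over
  the support of the prior.\<close>
definition em_fixed_point ::
  "real^'p^'n \<Rightarrow> real^'n \<Rightarrow> real \<Rightarrow> real \<Rightarrow> real \<Rightarrow> (('p::finite \<Rightarrow> bool) \<Rightarrow> real)
    \<Rightarrow> ('p \<Rightarrow> bool) \<Rightarrow> real^'p \<Rightarrow> bool" where
  "em_fixed_point H y gamma2 eps2 sigma2 prior q s \<longleftrightarrow>
     prior q > 0 \<and>
     (\<forall>q' s'. prior q' > 0 \<longrightarrow>
        em_objective gamma2 eps2 sigma2 prior (em_estep H y s) q' s'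
          \<le> em_objective gamma2 eps2 sigma2 prior (em_estep H y s) q s)"

end

theory Submission
  imports Defs
begin

lemma diag_mult_vec:
  fixes d :: "'p::finite \<Rightarrow> real"
  shows "(\<chi> i j. if i = j then d i else 0) *v x = (\<chi> i. d i * x$i)"
  unfolding matrix_vector_mult_def vec_eq_iff
  by (simp add: if_distrib[of "\<lambda>v. v * _"] cong: if_cong)

lemma diag_mult_mat:
  fixes d e :: "'p::finite \<Rightarrow> real"
  shows "(\<chi> i j. if i = j then d i else 0) ** (\<chi> i j. if i = j then e i else 0)
         = (\<chi> i j. if i = j then d i * e i else (0::real))"
  unfolding matrix_matrix_mult_def vec_eq_iff
  by (simp add: if_distrib[of "\<lambda>v. v * _"] cong: if_cong)

lemma matrix_inv_diag:
  fixes d :: "'p::finite \<Rightarrow> real"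
  assumes "\<And>i. d i \<noteq> 0"
  shows "matrix_inv (\<chi> i j. if i = j then d i else 0) = (\<chi> i j. if i = j then 1 / d i else 0)"
proof -
  let ?D = "(\<chi> i j. if i = j then d i else 0) :: real^'p^'p"
  let ?E = "(\<chi> i j. if i = j then 1 / d i else 0) :: real^'p^'p"
  have m1: "(\<chi> i j. if i = j then 1 else (0::real)) = (mat 1 :: real^'p^'p)"
    by (simp add: mat_def vec_eq_iff)
  have m2: "(\<chi> i j. if i = j then d i * (1 / d i) else (0::real)) = (mat 1 :: real^'p^'p)"
    "(\<chi> i j. if i = j then 1 / d i * d i else (0::real)) = (mat 1 :: real^'p^'p)"
    using assms by (simp_all add: mat_def vec_eq_iff)
  have DE: "?D ** ?E = mat 1" by (simp only: diag_mult_mat m2)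
  have ED: "?E ** ?D = mat 1" by (simp only: diag_mult_mat m2)
  have inv: "invertible ?D" unfolding invertible_def using DE ED by blast
  then have "?D ** matrix_inv ?D = mat 1 \<and> matrix_inv ?D ** ?D = mat 1"
    unfolding invertible_def matrix_inv_def by (rule someI_ex)
  then have "matrix_inv ?D ** ?D = mat 1" by blast
  then have "matrix_inv ?D = matrix_inv ?D ** (?D ** ?E)" using DE by simp
  also have "\<dots> = ?E" using \<open>matrix_inv ?D ** ?D = mat 1\<close>
    by (simp add: matrix_mul_assoc)
  finally show ?thesis .
qed

lemma quad_zero:
  fixes a c :: real
  assumes "c > 0" and "\<And>t. 0 \<le> 2 * t * a + t^2 * c"
  shows "a = 0"
proof -
  have "0 \<le> 2 * (-a/c) * a + (-a/c)^2 * c" by (rule assms(2))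
  also have "\<dots> = - (a^2 / c)" using assms(1) by (simp add: field_simps power2_eq_square)
  finally have "a^2 / c \<le> 0" by simp
  moreover have "a^2/c \<ge> 0" using assms(1) by simp
  ultimately have "a^2 / c = 0" by linarith
  then show ?thesis using assms(1) by simp
qed

theorem theorem1:
  fixes H :: "real^'p::finite^'n::finite"
    and y :: "real^'n"
    and gamma2 eps2 sigma2 Proot PH PL :: real
    and rho kappa L :: nat
    and ups :: "'p \<Rightarrow> nat \<times> nat"
    and q :: "'p \<Rightarrow> bool"
    and s :: "real^'p"
  assumes "CARD('n) \<le> CARD('p)"
    and "rank H = CARD('n)"
    and "onorm (\<lambda>x. H *v x) = 1"
    and "gamma2 > 0" and "eps2 > 0" and "sigma2 > 0"
    and "L \<ge> 1" and "2^L dvd rho" and "2^L dvd kappa"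
    and "bij_betw ups UNIV ({1..rho} \<times> {1..kappa})"
    and "0 < Proot" and "Proot < 1" and "0 < PH" and "PH < 1" and "0 < PL" and "PL < 1"
    and "em_fixed_point H y gamma2 eps2 sigma2
           (markov_tree_prior rho kappa L ups Proot PH PL) q s"
  shows "s = (Dmat gamma2 eps2 q ** transpose H)
               *v (matrix_inv (mat 1 + H ** Dmat gamma2 eps2 q ** transpose H) *v y)"
proof -
  define d where "d i = (if q i then gamma2 else eps2)" for i
  have dpos: "d i > 0" for i using assms(4,5) by (simp add: d_def)
  define D where "D = Dmat gamma2 eps2 q"
  have Dd: "D = (\<chi> i j. if i = j then d i else 0)"
    unfolding D_def Dmat_def d_def by simp
  have Dinv: "matrix_inv D = (\<chi> i j. if i = j then 1 / d i else 0)"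
  proof -
    have "\<And>i. d i \<noteq> 0" using dpos by (metis order_less_irrefl)
    then show ?thesis unfolding Dd by (rule matrix_inv_diag)
  qed
  have Dv: "D *v x = (\<chi> i. d i * x$i)" for x unfolding Dd by (rule diag_mult_vec)
  have Dinvv: "matrix_inv D *v x = (\<chi> i. 1 / d i * x$i)" for x
    unfolding Dinv by (rule diag_mult_vec)
  define prior where "prior = markov_tree_prior rho kappa L ups Proot PH PL"
  define z where "z = em_estep H y s"
  define N where "N w = (\<Sum>j\<in>UNIV. (z$j - w$j)^2 + (w$j)^2 / d j)" for w
  have objN: "em_objective gamma2 eps2 sigma2 prior z q w =
      - (1/2) * N w / sigma2 + (ln (prior q) + (1/2) * ln (eps2 / gamma2) * (\<Sum>i\<in>UNIV. of_bool (q i)))"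
    for w
  proof -
    have n1: "(norm (z - w))^2 = (\<Sum>j\<in>UNIV. (z$j - w$j)^2)"
      unfolding power2_norm_eq_inner inner_vec_def by (simp add: power2_eq_square)
    have n2: "w \<bullet> (matrix_inv D *v w) = (\<Sum>j\<in>UNIV. (w$j)^2 / d j)"
      unfolding Dinvv by (simp add: inner_vec_def power2_eq_square)
    have "(norm (z - w))^2 + w \<bullet> (matrix_inv D *v w) = N w"
      unfolding N_def n1 n2 by (simp add: sum.distrib)
    then show ?thesis unfolding em_objective_def D_def by simp
  qed
  have fp: "prior q > 0 \<and> (\<forall>q' s'. prior q' > 0 \<longrightarrow>
        em_objective gamma2 eps2 sigma2 prior z q' s' \<le> em_objective gamma2 eps2 sigma2 prior z q s)"
    using assms(17) unfolding em_fixed_point_def prior_def z_def by blast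
  have Nmin: "N s \<le> N w" for w
  proof -
    have "em_objective gamma2 eps2 sigma2 prior z q w \<le> em_objective gamma2 eps2 sigma2 prior z q s"
      using fp by blast
    then have "- (1/2) * N w / sigma2 \<le> - (1/2) * N s / sigma2" unfolding objN by simp
    then show ?thesis using assms(6) by (simp add: divide_le_cancel)
  qed
  have coord: "s$i = d i * (transpose H *v (y - H *v s))$i" for i
  proof -
    define a where "a = (s$i - z$i) + s$i / d i"
    define c where "c = 1 + 1 / d i"
    have c0: "c > 0" unfolding c_def using dpos[of i]
      by (smt (verit) divide_pos_pos)
    have "0 \<le> 2 * t * a + t^2 * c" for t
    proof -
      define w where "w = (\<chi> j. if j = i then s$j + t else s$j)"
      define phi where "phi j x = (z$j - x)^2 + x^2 / d j" for j x
      have "N w - N s = (\<Sum>j\<in>UNIV. phi j (w$j) - phi j (s$j))"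
        unfolding N_def phi_def by (simp add: sum_subtractf)
      also have "\<dots> = (\<Sum>j\<in>UNIV. if j = i then phi i (s$i + t) - phi i (s$i) else 0)"
        by (rule sum.cong) (auto simp: w_def)
      also have "\<dots> = phi i (s$i + t) - phi i (s$i)" by simp
      also have "\<dots> = 2 * t * a + t^2 * c"
        unfolding phi_def a_def c_def using dpos[of i]
        by (simp add: field_simps power2_eq_square)
      finally show ?thesis using Nmin[of w] by linarith
    qed
    then have "a = 0" using quad_zero c0 by blast
    moreover have "z$i = s$i + (transpose H *v (y - H *v s))$i"
      unfolding z_def em_estep_def by simp
    ultimately show ?thesis unfolding a_def using dpos[of i]
      by (simp add: field_simps)
  qed
  define r where "r = y - H *v s"
  have sD: "s = D *v (transpose H *v r)"
    unfolding Dv r_def vec_eq_iff using coord by simp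
  define M where "M = mat 1 + H ** D ** transpose H"
  have Mr: "M *v r = y"
  proof -
    have "M *v r = r + H *v (D *v (transpose H *v r))"
      unfolding M_def by (simp only: matrix_mul_assoc matrix_vector_mul_assoc matrix_vector_mult_add_rdistrib matrix_vector_mul_lid)
    also have "\<dots> = y" using sD by (simp add: r_def)
    finally show ?thesis .
  qed
  have ker: "\<forall>x. M *v x = 0 \<longrightarrow> x = 0"
  proof (intro allI impI)
    fix x assume "M *v x = 0"
    define u where "u = transpose H *v x"
    have "0 = x \<bullet> (M *v x)" using \<open>M *v x = 0\<close> by simp
    also have "\<dots> = x \<bullet> x + x \<bullet> (H *v (D *v u))"
      unfolding M_def u_def
      by (simp only: matrix_mul_assoc matrix_vector_mul_assoc matrix_vector_mult_add_rdistrib matrix_vector_mul_lid inner_add_right)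
    also have "x \<bullet> (H *v (D *v u)) = u \<bullet> (D *v u)"
      unfolding u_def by (simp flip: dot_lmul_matrix)
    also have "u \<bullet> (D *v u) = (\<Sum>j\<in>UNIV. d j * (u$j)^2)"
      unfolding Dv by (simp add: inner_vec_def power2_eq_square mult.assoc mult.left_commute)
    finally have "x \<bullet> x = - (\<Sum>j\<in>UNIV. d j * (u$j)^2)" by linarith
    moreover have "(\<Sum>j\<in>UNIV. d j * (u$j)^2) \<ge> 0"
      by (rule sum_nonneg) (use dpos in \<open>simp add: less_imp_le\<close>)
    ultimately have "x \<bullet> x \<le> 0" by linarith
    then show "x = 0" by (metis inner_eq_zero_iff inner_ge_zero order_antisym)
  qed
  then obtain B where "B ** M = mat 1" using matrix_left_invertible_ker by blast
  then have "invertible M" using invertible_left_inverse by blast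
  then have "M ** matrix_inv M = mat 1 \<and> matrix_inv M ** M = mat 1"
    unfolding invertible_def matrix_inv_def by (rule someI_ex)
  then have "matrix_inv M *v y = r"
    using Mr by (metis matrix_vector_mul_assoc matrix_vector_mul_lid)
  then show ?thesis
    using sD unfolding M_def D_def by (simp only: matrix_vector_mul_assoc)
qed

end
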